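(* For every temporal oriented tree $\mathcal T$, the minimum cardinality of a temporal path cover of $\mathcal T$ equals the minimum cardinality of a clique cover of the connectivity graph $G$ of $\mathcal T$.
   Context: A temporal digraph is a pair $(D,\lambda)$ with $D=(V,A)$ a finite digraph and $\lambda:A\to 2^{\{1,\dots,t_{\max}\}}$ giving the time-steps at which each arc is active. A temporal oriented tree $\mathcal T=(T,\lambda)$ is one whose underlying digraph $T$ is an orientation of a tree. A temporal path is a sequence $(v_1,v_2,t_1),\dots,(v_{k-1},v_k,t_{k-1})$ with pairwise distinct $v_i$, $\overrightarrow{v_iv_{i+1}}\in A$, $t_i\in\lambda(\overrightarrow{v_iv_{i+1}})$ and $t_1<\dots<t_{k-1}$; a single vertex is also a temporal path. A temporal path cover is a collection of temporal paths whose vertex sets together contain $V$. Two vertices $u\ne v$ are temporally connected if there is a temporal path from $u$ to $v$ or from $v$ to $u$. The connectivity graph of $\mathcal T$ is the undirected graph $G$ with $V(G)=V(T)$ and $uv\in E(G)$ iff $u\neq v$ and $u,v$ are temporally connected. A clique cover of $G$ is a set of complete subgraphs of $G$ whose vertex sets cover $V(G)$. *)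

theory Defs
  imports Main
begin

definition temporal_digraph ::
  "'v set \<Rightarrow> ('v \<times> 'v) set \<Rightarrow> ('v \<times> 'v \<Rightarrow> nat set) \<Rightarrow> nat \<Rightarrow> bool" where
  "temporal_digraph V A lam tmax \<longleftrightarrow>
     finite V \<and> A \<subseteq> V \<times> V \<and> (\<forall>a\<in>A. lam a \<subseteq> {1..tmax})"

definition und_adj :: "('v \<times> 'v) set \<Rightarrow> 'v \<Rightarrow> 'v \<Rightarrow> bool" where
  "und_adj A u v \<longleftrightarrow> (u, v) \<in> A \<or> (v, u) \<in> A"

definition und_connected :: "'v set \<Rightarrow> ('v \<times> 'v) set \<Rightarrow> bool" where
  "und_connected V A \<longleftrightarrow> (\<forall>u\<in>V. \<forall>v\<in>V. (u, v) \<in> (A \<union> A\<inverse>)\<^sup>*)"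

definition und_cycle :: "('v \<times> 'v) set \<Rightarrow> 'v list \<Rightarrow> bool" where
  "und_cycle A cs \<longleftrightarrow> length cs \<ge> 3 \<and> distinct cs \<and>
     (\<forall>i < length cs - 1. und_adj A (cs ! i) (cs ! (i + 1))) \<and>
     und_adj A (last cs) (hd cs)"

definition oriented_tree :: "'v set \<Rightarrow> ('v \<times> 'v) set \<Rightarrow> bool" where
  "oriented_tree V A \<longleftrightarrow> finite V \<and> V \<noteq> {} \<and> A \<subseteq> V \<times> V \<and>
     (\<forall>v. (v, v) \<notin> A) \<and> (\<forall>u v. (u, v) \<in> A \<longrightarrow> (v, u) \<notin> A) \<and>
     und_connected V A \<and> (\<nexists>cs. set cs \<subseteq> V \<and> und_cycle A cs)"

definition temporal_path ::
  "'v set \<Rightarrow> ('v \<times> 'v) set \<Rightarrow> ('v \<times> 'v \<Rightarrow> nat set) \<Rightarrow> 'v list \<times> nat list \<Rightarrow> bool" where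
  "temporal_path V A lam p \<longleftrightarrow> (case p of (vs, ts) \<Rightarrow>
     vs \<noteq> [] \<and> set vs \<subseteq> V \<and> distinct vs \<and> length ts = length vs - 1 \<and>
     (\<forall>i < length ts. (vs ! i, vs ! (i + 1)) \<in> A \<and> ts ! i \<in> lam (vs ! i, vs ! (i + 1))) \<and>
     sorted_wrt (<) ts)"

definition temporal_path_cover ::
  "'v set \<Rightarrow> ('v \<times> 'v) set \<Rightarrow> ('v \<times> 'v \<Rightarrow> nat set) \<Rightarrow> ('v list \<times> nat list) set \<Rightarrow> bool" where
  "temporal_path_cover V A lam P \<longleftrightarrow>
     finite P \<and> (\<forall>p\<in>P. temporal_path V A lam p) \<and> V \<subseteq> (\<Union>p\<in>P. set (fst p))"

definition min_temporal_path_cover ::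
  "'v set \<Rightarrow> ('v \<times> 'v) set \<Rightarrow> ('v \<times> 'v \<Rightarrow> nat set) \<Rightarrow> nat" where
  "min_temporal_path_cover V A lam =
     (LEAST k. \<exists>P. temporal_path_cover V A lam P \<and> card P = k)"

definition temporal_path_from_to ::
  "'v set \<Rightarrow> ('v \<times> 'v) set \<Rightarrow> ('v \<times> 'v \<Rightarrow> nat set) \<Rightarrow> 'v \<Rightarrow> 'v \<Rightarrow> bool" where
  "temporal_path_from_to V A lam u v \<longleftrightarrow>
     (\<exists>vs ts. temporal_path V A lam (vs, ts) \<and> hd vs = u \<and> last vs = v)"

definition temporally_connected ::
  "'v set \<Rightarrow> ('v \<times> 'v) set \<Rightarrow> ('v \<times> 'v \<Rightarrow> nat set) \<Rightarrow> 'v \<Rightarrow> 'v \<Rightarrow> bool" where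
  "temporally_connected V A lam u v \<longleftrightarrow> u \<noteq> v \<and>
     (temporal_path_from_to V A lam u v \<or> temporal_path_from_to V A lam v u)"

definition connectivity_graph_edges ::
  "'v set \<Rightarrow> ('v \<times> 'v) set \<Rightarrow> ('v \<times> 'v \<Rightarrow> nat set) \<Rightarrow> 'v set set" where
  "connectivity_graph_edges V A lam =
     {{u, v} | u v. u \<in> V \<and> v \<in> V \<and> temporally_connected V A lam u v}"

text \<open>Clique covers of an undirected graph (VG, EG); a complete subgraph is identified
  with its vertex set.\<close>
definition is_clique :: "'v set \<Rightarrow> 'v set set \<Rightarrow> 'v set \<Rightarrow> bool" where
  "is_clique VG EG C \<longleftrightarrow> C \<subseteq> VG \<and> (\<forall>u\<in>C. \<forall>v\<in>C. u \<noteq> v \<longrightarrow> {u, v} \<in> EG)"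

definition clique_cover :: "'v set \<Rightarrow> 'v set set \<Rightarrow> 'v set set \<Rightarrow> bool" where
  "clique_cover VG EG \<C> \<longleftrightarrow> finite \<C> \<and> (\<forall>C\<in>\<C>. is_clique VG EG C) \<and> VG \<subseteq> \<Union>\<C>"

definition min_clique_cover :: "'v set \<Rightarrow> 'v set set \<Rightarrow> nat" where
  "min_clique_cover VG EG = (LEAST k. \<exists>\<C>. clique_cover VG EG \<C> \<and> card \<C> = k)"

end

theory Submission
  imports Defs
begin

definition dpath :: "'v set \<Rightarrow> ('v \<times> 'v) set \<Rightarrow> 'v list \<Rightarrow> bool" where
  "dpath V A xs \<longleftrightarrow> xs \<noteq> [] \<and> distinct xs \<and> set xs \<subseteq> V \<and> successively (\<lambda>x y. (x,y) \<in> A) xs"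

definition upath :: "'v set \<Rightarrow> ('v \<times> 'v) set \<Rightarrow> 'v list \<Rightarrow> bool" where
  "upath V A xs \<longleftrightarrow> xs \<noteq> [] \<and> distinct xs \<and> set xs \<subseteq> V \<and> successively (und_adj A) xs"

lemma dpath_upath: "dpath V A xs \<Longrightarrow> upath V A xs"
  unfolding dpath_def upath_def by (auto elim: successively_mono simp: und_adj_def)

lemma hd_last_distinct: "distinct xs \<Longrightarrow> xs \<noteq> [] \<Longrightarrow> hd xs = last xs \<Longrightarrow> xs = [hd xs]"
  by (cases xs) (auto, metis last_in_set)

lemma upath_unique:
  assumes noc: "\<And>cs. set cs \<subseteq> V \<Longrightarrow> \<not> und_cycle A cs"
  shows "upath V A xs \<Longrightarrow> upath V A ys \<Longrightarrow> hd xs = hd ys \<Longrightarrow> last xs = last ys \<Longrightarrow> xs = ys"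
proof (induction xs arbitrary: ys)
  case Nil thus ?case by (simp add: upath_def)
next
  case (Cons x xs')
  obtain y ys' where ys: "ys = y # ys'" using Cons.prems(2) by (cases ys) (auto simp: upath_def)
  have xy: "x = y" using Cons.prems ys by simp
  show ?case
  proof (cases "xs' = []")
    case True
    then have "hd ys = last ys" using Cons.prems by simp
    then have "ys = [hd ys]" using hd_last_distinct[of ys] Cons.prems(2) by (simp add: upath_def)
    then show ?thesis using True ys xy by simp
  next
    case xne: False
    show ?thesis
    proof (cases "ys' = []")
      case True
      then have "hd (x#xs') = last (x#xs')" using Cons.prems ys by simp
      then have "x#xs' = [x]" using hd_last_distinct[of "x#xs'"] Cons.prems(1) by (auto simp: upath_def)
      with xne show ?thesis by simp
    next
      case ys'ne: False
      obtain a r1 where xs': "xs' = a # r1" using xne by (cases xs') auto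
      obtain b r2 where ys'': "ys' = b # r2" using ys'ne by (cases ys') auto
      have up1: "upath V A xs'" using Cons.prems(1) xne by (auto simp: upath_def successively_Cons)
      have up2: "upath V A ys'" using Cons.prems(2) ys ys'ne by (auto simp: upath_def successively_Cons)
      have lasteq: "last xs' = last ys'" using Cons.prems(4) ys xne ys'ne by simp
      show ?thesis
      proof (cases "a = b")
        case True
        then have "xs' = ys'" using Cons.IH[OF up1 up2] xs' ys'' lasteq by simp
        then show ?thesis using ys xy by simp
      next
        case False
        have "last xs' \<in> set ys'" using lasteq ys'ne by simp
        then have "\<exists>e\<in>set xs'. e \<in> set ys'" using xne by auto
        then obtain p1 d q1 where L1: "xs' = p1 @ d # q1" and d2: "d \<in> set ys'"
          and p1n: "\<forall>e\<in>set p1. e \<notin> set ys'"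
          using split_list_first_prop[of xs' "\<lambda>e. e \<in> set ys'"] by blast
        obtain p2 q2 where L2: "ys' = p2 @ d # q2" using split_list[OF d2] by blast
        define cs where "cs = (x # p1 @ [d]) @ rev p2"
        have dx: "distinct (x # p1 @ d # q1)" using Cons.prems(1) L1 by (simp add: upath_def)
        have dy: "distinct (x # p2 @ d # q2)" using Cons.prems(2) L2 ys xy by (simp add: upath_def)
        have dcs: "distinct cs" using dx dy p1n L2 unfolding cs_def by auto
        have lcs: "length cs \<ge> 3"
        proof -
          have "p1 \<noteq> [] \<or> p2 \<noteq> []"
          proof (rule ccontr)
            assume "\<not> (p1 \<noteq> [] \<or> p2 \<noteq> [])"
            then have "a = d" "b = d" using L1 L2 xs' ys'' by auto
            with False show False by simp
          qed
          then show ?thesis unfolding cs_def by (auto simp: Suc_le_eq)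
        qed
        have sym: "\<And>u v. und_adj A u v \<Longrightarrow> und_adj A v u" by (auto simp: und_adj_def)
        have sx: "successively (und_adj A) ((x # p1 @ [d]) @ q1)"
          using Cons.prems(1) L1 by (simp add: upath_def)
        then have s1: "successively (und_adj A) (x # p1 @ [d])"
          by (simp only: successively_append_iff)
        have sy: "successively (und_adj A) ((p2 @ [d]) @ q2)"
          using up2 L2 by (simp add: upath_def)
        then have s2: "successively (und_adj A) (p2 @ [d])"
          by (simp only: successively_append_iff)
        then have "successively (\<lambda>u v. und_adj A v u) (p2 @ [d])"
          by (rule successively_mono) (rule sym)
        then have s3: "successively (und_adj A) (d # rev p2)"
          by (metis rev_rev_ident rev_singleton_conv rev_append append_Cons append_Nil successively_rev)
        have scs: "successively (und_adj A) cs"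
          unfolding cs_def successively_append_iff using s1 s3
          by (auto simp: successively_Cons)
        have hb: "und_adj A x b" using Cons.prems(2) ys ys'' xy by (simp add: upath_def)
        have lastb: "last cs = b"
        proof (cases "p2 = []")
          case True then show ?thesis using L2 ys'' unfolding cs_def by simp
        next
          case f: False
          then have "last cs = hd p2" unfolding cs_def by (simp add: last_rev)
          then show ?thesis using L2 ys'' f by (cases p2) auto
        qed
        have "und_cycle A cs"
          unfolding und_cycle_def
        proof (intro conjI)
          show "3 \<le> length cs" by fact
          show "distinct cs" by fact
          show "\<forall>i<length cs - 1. und_adj A (cs ! i) (cs ! (i + 1))"
            using scs unfolding successively_conv_nth by auto
          show "und_adj A (last cs) (hd cs)" using lastb hb sym unfolding cs_def by simp
        qed
        moreover have "set cs \<subseteq> V"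
          using Cons.prems(1,2) L1 L2 ys unfolding cs_def upath_def by auto
        ultimately show ?thesis using noc by blast
      qed
    qed
  qed
qed

lemma ot_noc: "oriented_tree V A \<Longrightarrow> set cs \<subseteq> V \<Longrightarrow> \<not> und_cycle A cs"
  unfolding oriented_tree_def by blast

lemma upath_rev: "upath V A xs \<Longrightarrow> upath V A (rev xs)"
  unfolding upath_def by (auto elim: successively_mono simp: und_adj_def)

lemma dpath_antisym:
  assumes ot: "oriented_tree V A" and d1: "dpath V A xs" and d2: "dpath V A ys"
    and h1: "hd xs = last ys" and h2: "last xs = hd ys" and ne: "hd xs \<noteq> last xs"
  shows False
proof -
  have "xs = rev ys"
    using upath_unique[of V A xs "rev ys"] ot_noc[OF ot] dpath_upath[OF d1] upath_rev[OF dpath_upath[OF d2]]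
      h1 h2 d2 by (auto simp: hd_rev last_rev dpath_def)
  then have ys: "ys = rev xs" by simp
  obtain u w r where xs: "xs = u # w # r" using ne d1
    by (cases xs; cases "tl xs") (auto simp: dpath_def)
  have "(u, w) \<in> A" using d1 xs by (simp add: dpath_def)
  moreover have "successively (\<lambda>x y. (y, x) \<in> A) xs" using d2 ys by (simp add: dpath_def)
  then have "(w, u) \<in> A" using xs by simp
  ultimately show False using ot unfolding oriented_tree_def by blast
qed

lemma dpath_suffix: "dpath V A (xs @ ys) \<Longrightarrow> ys \<noteq> [] \<Longrightarrow> dpath V A ys"
  by (auto simp: dpath_def successively_append_iff)

lemma dpath_prefix: "dpath V A (xs @ ys) \<Longrightarrow> xs \<noteq> [] \<Longrightarrow> dpath V A xs"
  by (auto simp: dpath_def successively_append_iff)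

lemma dpath_join:
  assumes ot: "oriented_tree V A" and dp: "dpath V A p" and dq: "dpath V A q" and pq: "last p = hd q"
  shows "dpath V A (p @ tl q)"
proof -
  obtain y q' where q: "q = y # q'" using dq by (cases q) (auto simp: dpath_def)
  have disj: "set p \<inter> set q' = {}"
  proof (rule ccontr)
    assume "set p \<inter> set q' \<noteq> {}"
    then obtain m where m1: "m \<in> set p" and m2: "m \<in> set q'" by blast
    obtain p1 p2 where P: "p = p1 @ m # p2" using split_list[OF m1] by blast
    obtain r1 r2 where R: "q' = r1 @ m # r2" using split_list[OF m2] by blast
    have a: "dpath V A (m # p2)" using dpath_suffix[of V A p1 "m # p2"] dp P by simp
    have b: "dpath V A (y # r1 @ [m])"
      using dpath_prefix[of V A "y # r1 @ [m]" r2] dq q R by simp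
    have my: "m \<noteq> y" using dq q m2 by (auto simp: dpath_def)
    have "last (m # p2) = y" using pq P q by simp
    then show False using dpath_antisym[OF ot a b] my by simp
  qed
  show ?thesis
  proof (cases "q' = []")
    case True then show ?thesis using dp q by simp
  next
    case False
    have "(y, hd q') \<in> A" using dq q False by (cases q') (auto simp: dpath_def)
    then show ?thesis using dp dq q disj False pq
      by (auto simp: dpath_def successively_append_iff successively_Cons)
  qed
qed

lemma last_join: "p \<noteq> [] \<Longrightarrow> q \<noteq> [] \<Longrightarrow> last p = hd q \<Longrightarrow> last (p @ tl q) = last q"
  by (cases q) auto

lemma length_join: "p \<noteq> [] \<Longrightarrow> q \<noteq> [] \<Longrightarrow> length (p @ tl q) = length p + length q - 1"
  by (cases q) auto

lemma dpath_len2: "dpath V A q \<Longrightarrow> hd q \<noteq> last q \<Longrightarrow> length q \<ge> 2"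
  by (cases q; cases "tl q") (auto simp: dpath_def)

lemma tp_dpath: "temporal_path V A lam (vs, ts) \<Longrightarrow> dpath V A vs"
  unfolding temporal_path_def dpath_def successively_conv_nth by auto

lemma tpft_dpath: "temporal_path_from_to V A lam u v \<Longrightarrow> \<exists>ws. dpath V A ws \<and> hd ws = u \<and> last ws = v"
  unfolding temporal_path_from_to_def using tp_dpath by blast

lemma clique_path:
  assumes ot: "oriented_tree V A" and CV: "C \<subseteq> V" and cne: "C \<noteq> {}"
    and conn: "\<And>u v. u \<in> C \<Longrightarrow> v \<in> C \<Longrightarrow> u \<noteq> v \<Longrightarrow>
        temporal_path_from_to V A lam u v \<or> temporal_path_from_to V A lam v u"
  shows "\<exists>p. temporal_path V A lam p \<and> C \<subseteq> set (fst p)"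
proof -
  have fin: "finite V" using ot by (simp add: oriented_tree_def)
  have noc: "\<And>cs. set cs \<subseteq> V \<Longrightarrow> \<not> und_cycle A cs" using ot_noc[OF ot] by blast
  obtain c where c: "c \<in> C" using cne by blast
  let ?P = "\<lambda>p. temporal_path V A lam p \<and> hd (fst p) \<in> C \<and> last (fst p) \<in> C"
  have P0: "?P ([c], [])" using c CV by (auto simp: temporal_path_def)
  have bnd: "\<forall>p. ?P p \<longrightarrow> length (fst p) < Suc (card V)"
  proof (intro allI impI)
    fix p assume "?P p"
    then have "distinct (fst p)" "set (fst p) \<subseteq> V" by (auto simp: temporal_path_def split: prod.splits)
    then have "length (fst p) \<le> card V" using fin by (metis card_mono distinct_card)
    then show "length (fst p) < Suc (card V)" by simp
  qed
  obtain p where pP: "?P p" and pmax: "\<forall>q. ?P q \<longrightarrow> length (fst q) \<le> length (fst p)"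
    using Lattices_Big.ex_has_greatest_nat[of ?P "([c], [])" "\<lambda>p. length (fst p)", OF P0 bnd] by blast
  obtain vs ts where p: "p = (vs, ts)" by (cases p)
  have tvs: "temporal_path V A lam (vs, ts)" and aC: "hd vs \<in> C" and bC: "last vs \<in> C"
    using pP p by auto
  have dvs: "dpath V A vs" using tp_dpath[OF tvs] .
  have vsne: "vs \<noteq> []" using dvs by (simp add: dpath_def)
  have key: "\<And>ws ts'. temporal_path V A lam (ws, ts') \<Longrightarrow> hd ws \<in> C \<Longrightarrow> last ws \<in> C \<Longrightarrow>
      length ws \<le> length vs"
    using pmax p by fastforce
  have "C \<subseteq> set vs"
  proof
    fix z assume zC: "z \<in> C"
    show "z \<in> set vs"
    proof (rule ccontr)
      assume zn: "z \<notin> set vs"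
      have zna: "z \<noteq> hd vs" and znb: "z \<noteq> last vs" using zn vsne by auto
      consider (za) "temporal_path_from_to V A lam z (hd vs)"
        | (bz) "temporal_path_from_to V A lam (last vs) z"
        | (azb) "temporal_path_from_to V A lam (hd vs) z" "temporal_path_from_to V A lam z (last vs)"
        using conn[OF zC aC zna] conn[OF zC bC znb] by blast
      then show False
      proof cases
        case za
        then obtain q where dq: "dpath V A q" and hq: "hd q = z" and lq: "last q = hd vs"
          by (blast dest: tpft_dpath)
        have qne: "q \<noteq> []" using dq by (simp add: dpath_def)
        define w where "w = q @ tl vs"
        have dw: "dpath V A w" unfolding w_def using dpath_join[OF ot dq dvs lq] .
        have hw: "hd w = z" using hq qne unfolding w_def by simp
        have lw: "last w = last vs" using last_join[OF qne vsne lq] unfolding w_def .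
        have lenw: "length w > length vs"
          using dpath_len2[OF dq] hq lq zna length_join[OF qne vsne] unfolding w_def by simp
        have "\<not> temporal_path_from_to V A lam (last vs) z"
        proof
          assume "temporal_path_from_to V A lam (last vs) z"
          then obtain r where dr: "dpath V A r" and "hd r = last vs" "last r = z"
            by (blast dest: tpft_dpath)
          then show False using dpath_antisym[OF ot dw dr] hw lw znb by simp
        qed
        then have "temporal_path_from_to V A lam z (last vs)" using conn[OF zC bC znb] by blast
        then obtain r tr where tr: "temporal_path V A lam (r, tr)" and hr: "hd r = z" and lr: "last r = last vs"
          unfolding temporal_path_from_to_def by blast
        have "r = w" using upath_unique[OF noc dpath_upath[OF tp_dpath[OF tr]] dpath_upath[OF dw]] hr lr hw lw
          by simp
        then show False using key[OF tr] hr lr zC bC lenw by fastforce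
      next
        case bz
        then obtain q where dq: "dpath V A q" and hq: "hd q = last vs" and lq: "last q = z"
          by (blast dest: tpft_dpath)
        have qne: "q \<noteq> []" using dq by (simp add: dpath_def)
        define w where "w = vs @ tl q"
        have dw: "dpath V A w" unfolding w_def using dpath_join[OF ot dvs dq] hq by simp
        have hw: "hd w = hd vs" using vsne unfolding w_def by simp
        have lw: "last w = z" using last_join[OF vsne qne] hq lq unfolding w_def by simp
        have lenw: "length w > length vs"
          using dpath_len2[OF dq] hq lq znb length_join[OF vsne qne] unfolding w_def by simp
        have "\<not> temporal_path_from_to V A lam z (hd vs)"
        proof
          assume "temporal_path_from_to V A lam z (hd vs)"
          then obtain r where dr: "dpath V A r" and "hd r = z" "last r = hd vs"
            by (blast dest: tpft_dpath)
          then show False using dpath_antisym[OF ot dw dr] hw lw zna by simp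
        qed
        then have "temporal_path_from_to V A lam (hd vs) z" using conn[OF zC aC zna] by blast
        then obtain r tr where tr: "temporal_path V A lam (r, tr)" and hr: "hd r = hd vs" and lr: "last r = z"
          unfolding temporal_path_from_to_def by blast
        have "r = w" using upath_unique[OF noc dpath_upath[OF tp_dpath[OF tr]] dpath_upath[OF dw]] hr lr hw lw
          by simp
        then show False using key[OF tr] hr lr zC aC lenw by fastforce
      next
        case azb
        obtain q where dq: "dpath V A q" and hq: "hd q = hd vs" and lq: "last q = z"
          using tpft_dpath[OF azb(1)] by blast
        obtain r where dr: "dpath V A r" and hr: "hd r = z" and lr: "last r = last vs"
          using tpft_dpath[OF azb(2)] by blast
        have qne: "q \<noteq> []" and rne: "r \<noteq> []" using dq dr by (auto simp: dpath_def)
        define w where "w = q @ tl r"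
        have dw: "dpath V A w" unfolding w_def using dpath_join[OF ot dq dr] hr lq by simp
        have hw: "hd w = hd vs" using qne hq unfolding w_def by simp
        have lw: "last w = last vs" using last_join[OF qne rne] hr lq lr unfolding w_def by simp
        have "w = vs" using upath_unique[OF noc dpath_upath[OF dw] dpath_upath[OF dvs]] hw lw by simp
        moreover have "z \<in> set w" using lq qne unfolding w_def by auto
        ultimately show False using zn by simp
      qed
    qed
  qed
  then show ?thesis using tvs by auto
qed

lemma tp_sub:
  assumes tp: "temporal_path V A lam (vs, ts)" and ij: "i < j" and jl: "j < length vs"
  shows "temporal_path_from_to V A lam (vs ! i) (vs ! j)"
proof -
  define ws where "ws = take (j - i + 1) (drop i vs)"
  define us where "us = take (j - i) (drop i ts)"
  have lts: "length ts = length vs - 1" using tp by (simp add: temporal_path_def)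
  have lws: "length ws = j - i + 1" using ij jl unfolding ws_def by simp
  have lus: "length us = j - i" using ij jl lts unfolding us_def by simp
  have nws: "\<And>k. k \<le> j - i \<Longrightarrow> ws ! k = vs ! (i + k)" using ij jl unfolding ws_def by simp
  have nus: "\<And>k. k < j - i \<Longrightarrow> us ! k = ts ! (i + k)" using ij jl lts unfolding us_def by simp
  have "temporal_path V A lam (ws, us)"
    unfolding temporal_path_def prod.case
  proof (intro conjI allI impI)
    show "ws \<noteq> []" using lws by auto
    show "set ws \<subseteq> V" using tp unfolding ws_def temporal_path_def
      by (auto dest: in_set_takeD in_set_dropD)
    show "distinct ws" using tp unfolding ws_def temporal_path_def by simp
    show "length us = length ws - 1" using lws lus by simp
    show "sorted_wrt (<) us" using tp unfolding us_def temporal_path_def by simp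
    fix k assume k: "k < length us"
    have k2: "i + k < length ts" using k lus jl lts ij by simp
    have e1: "ws ! k = vs ! (i + k)" "ws ! (k + 1) = vs ! (i + k + 1)" "us ! k = ts ! (i + k)"
      using nws[of k] nws[of "k+1"] nus[of k] k lus by auto
    have "(vs ! (i + k), vs ! (i + k + 1)) \<in> A \<and> ts ! (i + k) \<in> lam (vs ! (i + k), vs ! (i + k + 1))"
      using tp k2 unfolding temporal_path_def by simp
    then show "(ws ! k, ws ! (k + 1)) \<in> A" "us ! k \<in> lam (ws ! k, ws ! (k + 1))"
      using e1 by simp_all
  qed
  moreover have "hd ws = vs ! i" using nws[of 0] lws by (cases ws) auto
  moreover have "last ws = vs ! j"
  proof -
    have "ws \<noteq> []" using lws by auto
    then have "last ws = ws ! (j - i)" using lws by (simp add: last_conv_nth)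
    also have "\<dots> = vs ! j" using nws[of "j - i"] ij by simp
    finally show ?thesis .
  qed
  ultimately show ?thesis unfolding temporal_path_from_to_def by blast
qed

lemma tp_clique:
  assumes tp: "temporal_path V A lam (vs, ts)"
  shows "is_clique V (connectivity_graph_edges V A lam) (set vs)"
  unfolding is_clique_def
proof (intro conjI ballI impI)
  show sv: "set vs \<subseteq> V" using tp by (simp add: temporal_path_def)
  fix u v assume u: "u \<in> set vs" and v: "v \<in> set vs" and uv: "u \<noteq> v"
  obtain i where i: "i < length vs" "vs ! i = u" using u by (auto simp: in_set_conv_nth)
  obtain j where j: "j < length vs" "vs ! j = v" using v by (auto simp: in_set_conv_nth)
  have "i \<noteq> j" using i j uv by auto
  then have "temporal_path_from_to V A lam u v \<or> temporal_path_from_to V A lam v u"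
    using tp_sub[OF tp, of i j] tp_sub[OF tp, of j i] i j by (cases "i < j") auto
  then have "temporally_connected V A lam u v" using uv by (simp add: temporally_connected_def)
  then show "{u, v} \<in> connectivity_graph_edges V A lam"
    using u v sv unfolding connectivity_graph_edges_def by blast
qed

lemma pc_to_cc:
  assumes "temporal_path_cover V A lam P"
  shows "\<exists>CC. clique_cover V (connectivity_graph_edges V A lam) CC \<and> card CC \<le> card P"
proof -
  define CC where "CC = (\<lambda>p. set (fst p)) ` P"
  have "clique_cover V (connectivity_graph_edges V A lam) CC"
    unfolding clique_cover_def CC_def
  proof (intro conjI ballI)
    show "finite ((\<lambda>p. set (fst p)) ` P)" using assms by (simp add: temporal_path_cover_def)
    show "V \<subseteq> \<Union> ((\<lambda>p. set (fst p)) ` P)" using assms by (simp add: temporal_path_cover_def)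
    fix C assume "C \<in> (\<lambda>p. set (fst p)) ` P"
    then obtain vs ts where "(vs, ts) \<in> P" "C = set vs" by auto
    then show "is_clique V (connectivity_graph_edges V A lam) C"
      using assms tp_clique unfolding temporal_path_cover_def by blast
  qed
  moreover have "card CC \<le> card P" unfolding CC_def using card_image_le assms
    by (auto simp: temporal_path_cover_def)
  ultimately show ?thesis by blast
qed

lemma clique_conn:
  assumes "is_clique V (connectivity_graph_edges V A lam) C" "u \<in> C" "v \<in> C" "u \<noteq> v"
  shows "temporal_path_from_to V A lam u v \<or> temporal_path_from_to V A lam v u"
proof -
  have "{u, v} \<in> connectivity_graph_edges V A lam" using assms unfolding is_clique_def by blast
  then obtain u' v' where "{u, v} = {u', v'}" "temporally_connected V A lam u' v'"
    unfolding connectivity_graph_edges_def by blast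
  then show ?thesis unfolding temporally_connected_def doubleton_eq_iff by auto
qed

lemma cc_to_pc:
  assumes ot: "oriented_tree V A" and cc: "clique_cover V (connectivity_graph_edges V A lam) CC"
  shows "\<exists>P. temporal_path_cover V A lam P \<and> card P \<le> card CC"
proof -
  obtain v0 where v0: "v0 \<in> V" using ot unfolding oriented_tree_def by blast
  have "\<forall>C\<in>CC. \<exists>p. temporal_path V A lam p \<and> C \<subseteq> set (fst p)"
  proof
    fix C assume C: "C \<in> CC"
    then have cl: "is_clique V (connectivity_graph_edges V A lam) C" using cc by (simp add: clique_cover_def)
    show "\<exists>p. temporal_path V A lam p \<and> C \<subseteq> set (fst p)"
    proof (cases "C = {}")
      case True
      then show ?thesis using v0 by (intro exI[of _ "([v0], [])"]) (simp add: temporal_path_def)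
    next
      case False
      have "C \<subseteq> V" using cl by (simp add: is_clique_def)
      then show ?thesis using clique_path[OF ot _ False, of lam] clique_conn[OF cl] by blast
    qed
  qed
  then obtain f where f: "\<forall>C\<in>CC. temporal_path V A lam (f C) \<and> C \<subseteq> set (fst (f C))"
    by metis
  define P where "P = f ` CC"
  have "temporal_path_cover V A lam P"
    unfolding temporal_path_cover_def P_def
  proof (intro conjI)
    show "finite (f ` CC)" using cc by (simp add: clique_cover_def)
    show "\<forall>p\<in>f ` CC. temporal_path V A lam p" using f by auto
    show "V \<subseteq> (\<Union>p\<in>f ` CC. set (fst p))" using cc f unfolding clique_cover_def by blast
  qed
  moreover have "card P \<le> card CC" unfolding P_def using card_image_le cc by (auto simp: clique_cover_def)
  ultimately show ?thesis by blast
qed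

theorem mainTheorem5:
  fixes V :: "'v set" and A :: "('v \<times> 'v) set" and lam :: "'v \<times> 'v \<Rightarrow> nat set"
    and tmax :: nat
  assumes "temporal_digraph V A lam tmax"
    and "oriented_tree V A"
  shows "min_temporal_path_cover V A lam
         = min_clique_cover V (connectivity_graph_edges V A lam)"
proof -
  let ?E = "connectivity_graph_edges V A lam"
  have ot: "oriented_tree V A" by fact
  have finV: "finite V" using ot by (simp add: oriented_tree_def)
  define P0 where "P0 = (\<lambda>v. ([v], [] :: nat list)) ` V"
  have P0: "temporal_path_cover V A lam P0"
    unfolding temporal_path_cover_def P0_def using finV by (auto simp: temporal_path_def)
  obtain P1 where P1: "temporal_path_cover V A lam P1" "card P1 = min_temporal_path_cover V A lam"
    using LeastI[of "\<lambda>k. \<exists>P. temporal_path_cover V A lam P \<and> card P = k" "card P0"] P0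
    unfolding min_temporal_path_cover_def by blast
  obtain C1 where C1: "clique_cover V ?E C1" "card C1 \<le> card P1" using pc_to_cc[OF P1(1)] by blast
  have le1: "min_clique_cover V ?E \<le> min_temporal_path_cover V A lam"
    using Least_le[of "\<lambda>k. \<exists>CC. clique_cover V ?E CC \<and> card CC = k" "card C1"] C1 P1(2)
    unfolding min_clique_cover_def by fastforce
  obtain C2 where C2: "clique_cover V ?E C2" "card C2 = min_clique_cover V ?E"
    using LeastI[of "\<lambda>k. \<exists>CC. clique_cover V ?E CC \<and> card CC = k" "card C1"] C1
    unfolding min_clique_cover_def by blast
  obtain P2 where P2: "temporal_path_cover V A lam P2" "card P2 \<le> card C2" using cc_to_pc[OF ot C2(1)] by blast
  have le2: "min_temporal_path_cover V A lam \<le> min_clique_cover V ?E"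
    using Least_le[of "\<lambda>k. \<exists>P. temporal_path_cover V A lam P \<and> card P = k" "card P2"] P2 C2(2)
    unfolding min_temporal_path_cover_def by fastforce
  show ?thesis using le1 le2 by simp
qed

end
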